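(* Let $X$ be a compact, finite-dimensional metrizable space. Let $Q$ be the set of all $d\in\mathrm{Met}(X)$ such that $(X,d)$ is isometrically embeddable into $(\mathbb{R}^N,\|\cdot\|_\infty)$ for some integer $N\ge1$, where $\|\cdot\|_\infty$ is the $\ell^\infty$-norm. Then $Q$ is dense in $(\mathrm{Met}(X),\mathcal{D}_X)$.
   Context: $\mathrm{Met}(X)$ is the set of all metrics on $X$ generating its topology, and $\mathcal{D}_X(d,e)=\sup_{x,y\in X}|d(x,y)-e(x,y)|$. Finite-dimensional means finite covering dimension. *)

theory Defs
  imports "HOL-Analysis.Analysis"
begin

definition Met :: "'a topology \<Rightarrow> ('a \<Rightarrow> 'a \<Rightarrow> real) set" where
  "Met T = {d. Metric_space (topspace T) d \<and> Metric_space.mtopology (topspace T) d = T}"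

definition DX :: "'a topology \<Rightarrow> ('a \<Rightarrow> 'a \<Rightarrow> real) \<Rightarrow> ('a \<Rightarrow> 'a \<Rightarrow> real) \<Rightarrow> ereal" where
  "DX T d e = (SUP p \<in> topspace T \<times> topspace T. ereal \<bar>d (fst p) (snd p) - e (fst p) (snd p)\<bar>)"

definition covering_dim_le :: "'a topology \<Rightarrow> nat \<Rightarrow> bool" where
  "covering_dim_le T n \<longleftrightarrow>
     (\<forall>\<U>. finite \<U> \<and> (\<forall>U\<in>\<U>. openin T U) \<and> \<Union>\<U> = topspace T \<longrightarrow>
        (\<exists>\<V>. finite \<V> \<and> (\<forall>V\<in>\<V>. openin T V) \<and> \<Union>\<V> = topspace T \<and>
             (\<forall>V\<in>\<V>. \<exists>U\<in>\<U>. V \<subseteq> U) \<and>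
             (\<forall>x\<in>topspace T. card {V\<in>\<V>. x \<in> V} \<le> n + 1)))"

definition finite_dimensional :: "'a topology \<Rightarrow> bool" where
  "finite_dimensional T \<longleftrightarrow> (\<exists>n. covering_dim_le T n)"

text \<open>(X,d) isometrically embeds into (R^N, sup-norm) for some N \<ge> 1;
  R^N is represented by functions nat \<Rightarrow> real restricted to indices < N.\<close>
definition linf_embeddable :: "'a topology \<Rightarrow> ('a \<Rightarrow> 'a \<Rightarrow> real) \<Rightarrow> bool" where
  "linf_embeddable T d \<longleftrightarrow>
     (\<exists>N::nat. N \<ge> 1 \<and> (\<exists>f :: 'a \<Rightarrow> nat \<Rightarrow> real.
        \<forall>x\<in>topspace T. \<forall>y\<in>topspace T. d x y = (MAX i\<in>{..<N}. \<bar>f x i - f y i\<bar>)))"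

end

theory Submission
  imports Defs
begin

lemma homog_sol:
  fixes Q :: "(nat \<Rightarrow> real) set"
  assumes "finite Q" "card Q < K"
  shows "\<exists>c::nat\<Rightarrow>real. (\<exists>i<K. c i \<noteq> 0) \<and> (\<forall>q\<in>Q. (\<Sum>i<K. c i * q i) = 0)"
  using assms
proof (induction "card Q" arbitrary: Q K rule: less_induct)
  case less
  obtain k where K: "K = Suc k" using less.prems by (cases K) auto
  show ?case
  proof (cases "\<forall>q\<in>Q. q k = 0")
    case True
    let ?c = "\<lambda>i. if i = k then 1 else (0::real)"
    have "(\<Sum>i<K. ?c i * q i) = q k" for q
      by (simp add: K if_distrib cong: if_cong)
    then show ?thesis using True K by (intro exI[of _ ?c]) auto
  next
    case False
    then obtain p where p: "p \<in> Q" "p k \<noteq> 0" by auto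
    define R where "R = Q - {p}"
    define F where "F = (\<lambda>q. \<lambda>i. p k * q i - q k * p i) ` R"
    have cR: "card R < card Q" using p less.prems(1) unfolding R_def by (meson card_Diff1_less)
    have "card F \<le> card R" unfolding F_def using less.prems by (simp add: R_def card_image_le)
    then have cF: "card F < card Q" "card F < k" using cR less.prems K p
      by (auto simp: R_def card_Diff_singleton)
    have fF: "finite F" using less.prems by (simp add: F_def R_def)
    obtain c' where c': "\<exists>i<k. c' i \<noteq> 0" "\<forall>q\<in>F. (\<Sum>i<k. c' i * q i) = 0"
      using less.hyps[OF cF(1) fF cF(2)] by blast
    define S where "S = (\<lambda>q. \<Sum>i<k. c' i * q i)"
    define c where "c = (\<lambda>i. if i < k then c' i else - S p / p k)"
    have sumc: "(\<Sum>i<K. c i * q i) = S q - S p / p k * q k" for q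
      by (simp add: K c_def S_def)
    have "\<forall>q\<in>Q. (\<Sum>i<K. c i * q i) = 0"
    proof
      fix q assume q: "q \<in> Q"
      show "(\<Sum>i<K. c i * q i) = 0"
      proof (cases "q = p")
        case True then show ?thesis using sumc p by simp
      next
        case False
        then have "q \<in> R" using q by (simp add: R_def)
        then have "(\<Sum>i<k. c' i * (p k * q i - q k * p i)) = 0" using c' by (auto simp: F_def)
        then have "p k * S q - q k * S p = 0"
          by (simp add: S_def algebra_simps sum_subtractf sum_distrib_left sum_distrib_right)
        then have "S q = S p / p k * q k" using p by (simp add: field_simps)
        then show ?thesis using sumc by simp
      qed
    qed
    moreover have "\<exists>i<K. c i \<noteq> 0" using c' K by (auto simp: c_def)
    ultimately show ?thesis by blast
  qed
qed

lemma hyperplane: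
  fixes Q :: "(nat \<Rightarrow> real) set"
  assumes "finite Q" "card Q \<le> N" "N \<ge> 1"
  shows "\<exists>c b. (\<exists>i<N. c i \<noteq> 0) \<and> (\<forall>q\<in>Q. (\<Sum>i<N. c i * q i) = b)"
proof (cases "Q = {}")
  case True
  have "0 < N" using assms by simp
  then have "(\<exists>i<N. (\<lambda>_. 1::real) i \<noteq> 0) \<and> (\<forall>q\<in>Q. (\<Sum>i<N. (\<lambda>_. 1::real) i * q i) = 0)"
    using True by auto
  then show ?thesis by (intro exI[of _ "\<lambda>_. 1::real"] exI[of _ "0::real"]) simp
next
  case False
  define Q' where "Q' = (\<lambda>q. q(N:=1)) ` Q"
  have "card Q' \<le> card Q" unfolding Q'_def using assms by (simp add: card_image_le)
  then have "card Q' < Suc N" using assms by simp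
  moreover have "finite Q'" using assms by (simp add: Q'_def)
  ultimately obtain c where c: "\<exists>i<Suc N. c i \<noteq> 0" "\<forall>q\<in>Q'. (\<Sum>i<Suc N. c i * q i) = 0"
    using homog_sol[of Q' "Suc N"] by blast
  have eq: "(\<Sum>i<Suc N. c i * (q(N:=1)) i) = (\<Sum>i<N. c i * q i) + c N" for q
  proof -
    have "(\<Sum>i<N. c i * (q(N:=1)) i) = (\<Sum>i<N. c i * q i)" by (rule sum.cong) auto
    then show ?thesis by simp
  qed
  have hq: "\<forall>q\<in>Q. (\<Sum>i<N. c i * q i) = - c N"
  proof
    fix q assume "q \<in> Q"
    then have "q(N:=1) \<in> Q'" by (simp add: Q'_def)
    then have "(\<Sum>i<Suc N. c i * (q(N:=1)) i) = 0" using c(2) by blast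
    then show "(\<Sum>i<N. c i * q i) = - c N" using eq[of q] by simp
  qed
  have "\<exists>i<N. c i \<noteq> 0"
  proof (rule ccontr)
    assume "\<not> ?thesis"
    then have z: "\<forall>i<N. c i = 0" by auto
    obtain q where "q \<in> Q" using False by auto
    then have "(\<Sum>i<N. c i * q i) = - c N" using hq by blast
    then have "c N = 0" using z by simp
    obtain i where i: "i < Suc N" "c i \<noteq> 0" using c(1) by blast
    then have "i < N \<or> i = N" by auto
    then show False using z i \<open>c N = 0\<close> by auto
  qed
  then show ?thesis using hq by blast
qed

lemma avoid_hyperplanes:
  fixes a :: "nat \<Rightarrow> real"
  assumes "finite H" "\<forall>(c,b)\<in>H. \<exists>i<N. c i \<noteq> 0" "\<eta> > 0"
  shows "\<exists>w. (\<forall>i<N. \<bar>w i - a i\<bar> < \<eta>) \<and> (\<forall>(c,b)\<in>H. (\<Sum>i<N. c i * w i) \<noteq> b)"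
proof -
  define Z where "Z = (\<lambda>(c,b). {t::real. (\<Sum>i<N. c i * (a i + t^(Suc i))) = b})"
  have finZ: "finite (Z h)" if "h \<in> H" for h
  proof -
    obtain c b where h: "h = (c,b)" by fastforce
    define co where "co = (\<lambda>k. if k = 0 then (\<Sum>i<N. c i * a i) - b else c (k - 1))"
    have eqp: "(\<Sum>i<N. c i * (a i + t^(Suc i))) - b = (\<Sum>k\<le>N. co k * t^k)" for t
    proof -
      have "(\<Sum>k\<le>N. co k * t^k) = co 0 * t^0 + (\<Sum>i<N. co (Suc i) * t^(Suc i))"
        by (rule sum.atMost_shift)
      also have "\<dots> = (\<Sum>i<N. c i * a i) - b + (\<Sum>i<N. c i * t^(Suc i))"
        by (simp add: co_def)
      also have "\<dots> = (\<Sum>i<N. c i * (a i + t^(Suc i))) - b"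
        by (simp add: distrib_left sum.distrib)
      finally show ?thesis by simp
    qed
    have "Z h = {t. (\<Sum>i<N. c i * (a i + t^(Suc i))) - b = 0}"
      by (simp add: Z_def h)
    also have "\<dots> = {t. (\<Sum>k\<le>N. co k * t^k) = 0}"
      by (simp only: eqp)
    finally have "Z h = {t. (\<Sum>k\<le>N. co k * t^k) = 0}" .
    moreover have "\<exists>k\<le>N. co k \<noteq> 0"
    proof -
      have "case h of (c,b) \<Rightarrow> \<exists>i<N. c i \<noteq> 0" using assms(2) that by blast
      then obtain i where "i < N" "c i \<noteq> 0" using h by auto
      then show ?thesis by (intro exI[of _ "Suc i"]) (auto simp: co_def)
    qed
    ultimately show ?thesis by (simp only: polyfun_finite_roots)
  qed
  have "finite (\<Union>(Z ` H))" using finZ assms(1) by blast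
  moreover have "infinite {0<..<min 1 \<eta>}" using assms(3) by simp
  ultimately have "infinite ({0<..<min 1 \<eta>} - \<Union>(Z ` H))"
    using Diff_infinite_finite by blast
  then obtain t where "t \<in> {0<..<min 1 \<eta>} - \<Union>(Z ` H)"
    by (metis ex_in_conv finite.emptyI)
  then have t: "t \<in> {0<..<min 1 \<eta>}" "t \<notin> \<Union>(Z ` H)" by auto
  define w where "w = (\<lambda>i. a i + t^(Suc i))"
  have "\<bar>w i - a i\<bar> < \<eta>" for i
  proof -
    have "t^i \<le> 1" using t(1) by (simp add: power_le_one)
    then have A: "t * t^i \<le> t" using t(1) by (simp add: mult_left_le)
    have B: "0 \<le> t * t^i" using t(1) by simp
    have C: "\<bar>w i - a i\<bar> = t * t^i" using B by (simp add: w_def)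
    have "t < \<eta>" using t(1) by simp
    then show ?thesis using A C by linarith
  qed
  moreover have "\<forall>(c,b)\<in>H. (\<Sum>i<N. c i * w i) \<noteq> b"
    using t(2) by (auto simp: Z_def w_def)
  ultimately show ?thesis by blast
qed

definition GP :: "nat \<Rightarrow> 'i set \<Rightarrow> ('i \<Rightarrow> nat \<Rightarrow> real) \<Rightarrow> bool" where
  "GP N I v \<longleftrightarrow> (\<forall>J\<subseteq>I. card J \<le> N + 1 \<longrightarrow> (\<forall>l. (\<Sum>j\<in>J. l j) = 0 \<and>
      (\<forall>i<N. (\<Sum>j\<in>J. l j * v j i) = 0) \<longrightarrow> (\<forall>j\<in>J. l j = 0)))"

lemma GPD: "GP N I v \<Longrightarrow> J \<subseteq> I \<Longrightarrow> card J \<le> N + 1 \<Longrightarrow> (\<Sum>j\<in>J. l j) = 0 \<Longrightarrow>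
   (\<forall>i<N. (\<Sum>j\<in>J. l j * v j i) = 0) \<Longrightarrow> j \<in> J \<Longrightarrow> l j = 0"
  unfolding GP_def by blast

lemma general_position:
  fixes a :: "'i \<Rightarrow> nat \<Rightarrow> real"
  assumes "finite I" "\<eta> > 0" "N \<ge> 1"
  shows "\<exists>v. (\<forall>j\<in>I. \<forall>i<N. \<bar>v j i - a j i\<bar> < \<eta>) \<and> GP N I v"
  using assms(1)
proof (induction I rule: finite_induct)
  case empty
  then show ?case by (auto simp: GP_def)
next
  case (insert j0 I)
  obtain v where v: "\<forall>j\<in>I. \<forall>i<N. \<bar>v j i - a j i\<bar> < \<eta>" "GP N I v" using insert.IH by blast
  define Fam where "Fam = {J. J \<subseteq> I \<and> card J \<le> N}"
  have finFam: "finite Fam" using insert.hyps(1) unfolding Fam_def by simp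
  have "\<forall>J\<in>Fam. \<exists>cb. (\<exists>i<N. fst cb i \<noteq> 0) \<and> (\<forall>j\<in>J. (\<Sum>i<N. fst cb i * v j i) = snd cb)"
  proof
    fix J assume J: "J \<in> Fam"
    then have fJ: "finite J" using insert.hyps(1) finite_subset by (auto simp: Fam_def)
    have "card (v ` J) \<le> N" using J card_image_le[OF fJ, of v] by (auto simp: Fam_def)
    then obtain c b where "\<exists>i<N. c i \<noteq> 0" "\<forall>q\<in>v ` J. (\<Sum>i<N. c i * q i) = b"
      using hyperplane[of "v ` J" N] fJ assms(3) by auto
    then show "\<exists>cb. (\<exists>i<N. fst cb i \<noteq> 0) \<and> (\<forall>j\<in>J. (\<Sum>i<N. fst cb i * v j i) = snd cb)"
      by (intro exI[of _ "(c,b)"]) auto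
  qed
  from bchoice[OF this] obtain hp where hp: "\<forall>J\<in>Fam. (\<exists>i<N. fst (hp J) i \<noteq> 0) \<and> (\<forall>j\<in>J. (\<Sum>i<N. fst (hp J) i * v j i) = snd (hp J))"
    by blast
  have "finite (hp ` Fam)" using finFam by simp
  moreover have "\<forall>(c,b)\<in>hp ` Fam. \<exists>i<N. c i \<noteq> 0"
  proof
    fix x assume "x \<in> hp ` Fam"
    then obtain J where "J \<in> Fam" "x = hp J" by blast
    then have "\<exists>i<N. fst x i \<noteq> 0" using hp by blast
    then show "case x of (c,b) \<Rightarrow> \<exists>i<N. c i \<noteq> 0" by (simp add: case_prod_beta)
  qed
  ultimately obtain w where w: "\<forall>i<N. \<bar>w i - a j0 i\<bar> < \<eta>" "\<forall>(c,b)\<in>hp ` Fam. (\<Sum>i<N. c i * w i) \<noteq> b"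
    using avoid_hyperplanes[of "hp ` Fam" N \<eta> "a j0"] assms(2) by blast
  define v' where "v' = v(j0 := w)"
  have close: "\<forall>j\<in>insert j0 I. \<forall>i<N. \<bar>v' j i - a j i\<bar> < \<eta>"
    using v(1) w(1) by (auto simp: v'_def)
  have "GP N (insert j0 I) v'"
    unfolding GP_def
  proof (intro allI impI ballI)
    fix J l j
    assume J: "J \<subseteq> insert j0 I" "card J \<le> N + 1"
      and l: "(\<Sum>j\<in>J. l j) = 0 \<and> (\<forall>i<N. (\<Sum>j\<in>J. l j * v' j i) = 0)" and j: "j \<in> J"
    have fJ: "finite J" using J insert.hyps(1) finite_subset by auto
    show "l j = 0"
    proof (cases "j0 \<in> J")
      case False
      then have JI: "J \<subseteq> I" using J by auto
      have "(\<Sum>j\<in>J. l j * v' j i) = (\<Sum>j\<in>J. l j * v j i)" for i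
        by (rule sum.cong) (use False in \<open>auto simp: v'_def\<close>)
      then have "\<forall>i<N. (\<Sum>j\<in>J. l j * v j i) = 0"
        using l by simp
      then show ?thesis using GPD[OF v(2) JI J(2) _ _ j] l by blast
    next
      case True
      define J' where "J' = J - {j0}"
      have J'I: "J' \<subseteq> I" using J by (auto simp: J'_def)
      have cJ': "card J' \<le> N" using J(2) True fJ by (simp add: J'_def)
      have vJ': "(\<Sum>j\<in>J'. l j * v' j i) = (\<Sum>j\<in>J'. l j * v j i)" for i
        by (rule sum.cong) (auto simp: J'_def v'_def)
      have s1: "l j0 + (\<Sum>j\<in>J'. l j) = 0" using l sum.remove[OF fJ True, of l] by (simp add: J'_def)
      have s2: "l j0 * w i + (\<Sum>j\<in>J'. l j * v j i) = 0" if "i < N" for i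
        using l that sum.remove[OF fJ True, of "\<lambda>j. l j * v' j i"] vJ'[of i]
        by (simp add: J'_def v'_def)
      have l0: "l j0 = 0"
      proof (rule ccontr)
        assume nz: "l j0 \<noteq> 0"
        define mu where "mu = (\<lambda>j. - l j / l j0)"
        have smu: "(\<Sum>j\<in>J'. mu j) = 1"
          using s1 nz by (simp add: mu_def sum_divide_distrib[symmetric] sum_negf field_simps)
        have wmu: "w i = (\<Sum>j\<in>J'. mu j * v j i)" if "i < N" for i
        proof -
          have "(\<Sum>j\<in>J'. mu j * v j i) = - (\<Sum>j\<in>J'. l j * v j i) / l j0"
            by (simp add: mu_def sum_divide_distrib[symmetric] sum_negf)
          also have "\<dots> = w i" using s2[OF that] nz by (simp add: field_simps)
          finally show ?thesis by simp
        qed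
        have JF: "J' \<in> Fam" using J'I cJ' by (simp add: Fam_def)
        obtain c b where cb: "hp J' = (c,b)" by fastforce
        have "\<forall>j\<in>J'. (\<Sum>i<N. fst (hp J') i * v j i) = snd (hp J')" using hp JF by blast
        then have hpJ: "\<forall>j\<in>J'. (\<Sum>i<N. c i * v j i) = b" using cb by simp
        have "(\<Sum>i<N. c i * w i) = (\<Sum>i<N. c i * (\<Sum>j\<in>J'. mu j * v j i))"
          using wmu by simp
        also have "\<dots> = (\<Sum>i<N. \<Sum>j\<in>J'. c i * (mu j * v j i))"
          by (simp add: sum_distrib_left)
        also have "\<dots> = (\<Sum>j\<in>J'. \<Sum>i<N. c i * (mu j * v j i))"
          by (rule sum.swap)
        also have "\<dots> = (\<Sum>j\<in>J'. mu j * (\<Sum>i<N. c i * v j i))"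
          by (simp add: sum_distrib_left mult.left_commute)
        also have "\<dots> = (\<Sum>j\<in>J'. mu j * b)" using hpJ by simp
        also have "\<dots> = b" using smu by (simp add: sum_distrib_right[symmetric])
        finally have "(\<Sum>i<N. c i * w i) = b" .
        moreover have "(c,b) \<in> hp ` Fam" using image_eqI[of "(c,b)" hp J' Fam] cb JF by simp
        then have "(\<Sum>i<N. c i * w i) \<noteq> b" using w(2) by blast
        ultimately show False by blast
      qed
      show ?thesis
      proof (cases "j = j0")
        case True then show ?thesis using l0 by simp
      next
        case False
        then have "j \<in> J'" using j by (simp add: J'_def)
        moreover have "(\<Sum>j\<in>J'. l j) = 0" using s1 l0 by simp
        moreover have "\<forall>i<N. (\<Sum>j\<in>J'. l j * v j i) = 0" using s2 l0 by simp
        ultimately show ?thesis using GPD[OF v(2) J'I] cJ' by simp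
      qed
    qed
  qed
  then show ?case using close by blast
qed


context Metric_space
begin

lemma lip_cont:
  assumes "\<forall>x\<in>M. \<forall>y\<in>M. \<bar>f x - f y\<bar> \<le> L * d x y"
  shows "continuous_map mtopology euclideanreal f"
proof -
  have "continuous_map mtopology Met_TC.mtopology f"
    unfolding metric_continuous_map[OF Met_TC.Metric_space_axioms]
  proof (intro conjI ballI allI impI)
    fix a and e :: real assume a: "a \<in> M" and e: "e > 0"
    show "\<exists>\<delta>>0. \<forall>x. x \<in> M \<and> d a x < \<delta> \<longrightarrow> dist (f a) (f x) < e"
    proof (intro exI[of _ "e / (\<bar>L\<bar> + 1)"] conjI allI impI)
      show "0 < e / (\<bar>L\<bar> + 1)" using e by simp
      fix x assume x: "x \<in> M \<and> d a x < e / (\<bar>L\<bar> + 1)"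
      have "\<bar>f a - f x\<bar> \<le> L * d a x" using assms a x by blast
      also have "\<dots> \<le> (\<bar>L\<bar> + 1) * d a x" by (intro mult_right_mono) auto
      also have "\<dots> < (\<bar>L\<bar> + 1) * (e / (\<bar>L\<bar> + 1))"
        using x by (intro mult_strict_left_mono) auto
      also have "\<dots> = e" by simp
      finally show "dist (f a) (f x) < e" by (simp add: dist_real_def)
    qed
  qed auto
  then show ?thesis by simp
qed

definition psi :: "'a set \<Rightarrow> 'a \<Rightarrow> real" where
  "psi V x = Inf (insert 1 ((\<lambda>y. d x y) ` (M - V)))"

lemma psi_bdd: "bdd_below (insert 1 ((\<lambda>y. d x y) ` (M - V)))"
  by (rule bdd_belowI[of _ 0]) auto

lemma psi_nonneg: "0 \<le> psi V x"
  unfolding psi_def by (rule cInf_greatest) auto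

lemma psi_le1: "psi V x \<le> 1"
  unfolding psi_def by (rule cInf_lower[OF _ psi_bdd]) auto

lemma psi_zero: "x \<in> M - V \<Longrightarrow> psi V x = 0"
proof -
  assume x: "x \<in> M - V"
  have "psi V x \<le> d x x" unfolding psi_def by (rule cInf_lower[OF _ psi_bdd]) (use x in blast)
  then show ?thesis using psi_nonneg[of V x] x by simp
qed

lemma psi_pos:
  assumes "openin mtopology V" "x \<in> V"
  shows "psi V x > 0"
proof -
  obtain r where r: "r > 0" "mball x r \<subseteq> V" using assms openin_mtopology by blast
  have xM: "x \<in> M" using assms openin_mtopology by blast
  have "min 1 r \<le> psi V x"
    unfolding psi_def
  proof (rule cInf_greatest)
    fix z assume "z \<in> insert 1 ((\<lambda>y. d x y) ` (M - V))"
    then consider "z = 1" | y where "y \<in> M - V" "z = d x y" by blast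
    then show "min 1 r \<le> z"
    proof cases
      case 2
      then have "y \<notin> mball x r" using r by blast
      then have "r \<le> d x y" using xM 2 by (auto simp: in_mball)
      then show ?thesis using 2 by simp
    qed simp
  qed simp
  then show ?thesis using r by linarith
qed

lemma psi_lip:
  assumes "x \<in> M" "x' \<in> M"
  shows "psi V x \<le> psi V x' + d x x'"
proof -
  have "psi V x - d x x' \<le> psi V x'"
    unfolding psi_def[of V x']
  proof (rule cInf_greatest)
    fix z assume "z \<in> insert 1 ((\<lambda>y. d x' y) ` (M - V))"
    then consider "z = 1" | y where "y \<in> M - V" "z = d x' y" by blast
    then show "psi V x - d x x' \<le> z"
    proof cases
      case 1 then show ?thesis using psi_le1[of V x] nonneg[of x x'] by linarith
    next
      case 2
      have "psi V x \<le> d x y" unfolding psi_def by (rule cInf_lower[OF _ psi_bdd]) (use 2 in blast)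
      moreover have "d x y \<le> d x x' + d x' y" using triangle assms 2 by blast
      ultimately show ?thesis using 2 by linarith
    qed
  qed simp
  then show ?thesis by linarith
qed

lemma psi_cont: "continuous_map mtopology euclideanreal (psi V)"
proof (rule lip_cont[of _ 1])
  show "\<forall>x\<in>M. \<forall>y\<in>M. \<bar>psi V x - psi V y\<bar> \<le> 1 * d x y"
    using psi_lip commute by (smt (verit))
qed


definition sepN :: "nat \<Rightarrow> ('a \<Rightarrow> nat \<Rightarrow> real) \<Rightarrow> real \<Rightarrow> real \<Rightarrow> bool" where
  "sepN N g r \<delta> \<longleftrightarrow> (\<forall>x\<in>M. \<forall>y\<in>M. (\<Sum>i<N. \<bar>g x i - g y i\<bar>) < \<delta> \<longrightarrow> d x y < r)"

lemma robust_sep: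
  fixes h :: "'a \<Rightarrow> nat \<Rightarrow> real" and N :: nat
  assumes cpt: "compact_space mtopology"
    and h: "\<forall>i<N. continuous_map mtopology euclideanreal (\<lambda>x. h x i)"
    and pw: "\<forall>x\<in>M. \<forall>y\<in>M. (\<forall>i<N. h x i = h y i) \<longrightarrow> d x y < r"
  shows "\<exists>\<delta>>0. sepN N h r \<delta>"
proof -
  let ?P = "prod_topology mtopology mtopology"
  define F where "F = (\<lambda>p. \<Sum>i<N. \<bar>h (fst p) i - h (snd p) i\<bar>)"
  have Fc: "continuous_map ?P euclideanreal F"
    unfolding F_def
  proof (intro continuous_map_sum continuous_map_real_abs continuous_map_diff)
    fix i assume "i \<in> {..<N}"
    then have hi: "continuous_map mtopology euclideanreal (\<lambda>x. h x i)" using h by auto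
    show "continuous_map ?P euclideanreal (\<lambda>p. h (fst p) i)"
      using continuous_map_compose[OF continuous_map_fst hi] by (simp add: o_def)
    show "continuous_map ?P euclideanreal (\<lambda>p. h (snd p) i)"
      using continuous_map_compose[OF continuous_map_snd hi] by (simp add: o_def)
  qed auto
  have dc: "continuous_map ?P euclideanreal (\<lambda>(x,y). d x y)"
    using continuous_map_metric[of "metric (M,d)"] by simp
  define K where "K = {p \<in> topspace ?P. (\<lambda>(x,y). d x y) p \<in> {r..}}"
  have "closedin ?P K" unfolding K_def
    by (rule closedin_continuous_map_preimage[OF dc]) simp
  moreover have "compact_space ?P" using cpt by (simp add: compact_space_prod_topology)
  ultimately have cK: "compactin ?P K" by (simp add: closedin_compact_space)
  show ?thesis
  proof (cases "K = {}")
    case True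
    have "sepN N h r 1"
      unfolding sepN_def
    proof (intro ballI impI)
      fix x y assume "x \<in> M" "y \<in> M"
      then have "(x,y) \<notin> K" using True by blast
      then show "d x y < r" using \<open>x \<in> M\<close> \<open>y \<in> M\<close> by (auto simp: K_def)
    qed
    then show ?thesis by (intro exI[of _ 1]) simp
  next
    case False
    have "compactin euclideanreal (F ` K)" by (rule image_compactin[OF cK Fc])
    then have "compact (F ` K)" by simp
    moreover have "F ` K \<noteq> {}" using False by simp
    ultimately obtain m where m: "m \<in> F ` K" "\<forall>z\<in>F ` K. m \<le> z"
      using compact_attains_inf by blast
    obtain p0 where p0: "p0 \<in> K" "m = F p0" using m(1) by blast
    have "m > 0"
    proof (rule ccontr)
      assume "\<not> m > 0"
      moreover have "m \<ge> 0" using p0 by (simp add: F_def sum_nonneg)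
      ultimately have "F p0 = 0" using p0 by simp
      then have "\<forall>i\<in>{..<N}. \<bar>h (fst p0) i - h (snd p0) i\<bar> = 0"
        unfolding F_def by (subst sum_nonneg_eq_0_iff[symmetric]) auto
      then have "\<forall>i<N. h (fst p0) i = h (snd p0) i" by auto
      moreover have "fst p0 \<in> M" "snd p0 \<in> M" "d (fst p0) (snd p0) \<ge> r"
        using p0 by (auto simp: K_def case_prod_beta)
      ultimately show False using pw by force
    qed
    have "sepN N h r m"
      unfolding sepN_def
    proof (intro ballI impI)
      fix x y assume xy: "x \<in> M" "y \<in> M" and lt: "(\<Sum>i<N. \<bar>h x i - h y i\<bar>) < m"
      show "d x y < r"
      proof (rule ccontr)
        assume "\<not> d x y < r"
        then have "(x,y) \<in> K" using xy by (auto simp: K_def)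
        then have "m \<le> F (x,y)" using m(2) by blast
        then show False using lt by (simp add: F_def)
      qed
    qed
    then show ?thesis using \<open>m > 0\<close> by blast
  qed
qed


lemma small_cover:
  fixes g :: "'a \<Rightarrow> nat \<Rightarrow> real" and N :: nat
  assumes cpt: "compact_space mtopology" and dim: "covering_dim_le mtopology n"
    and g: "\<forall>i<N. continuous_map mtopology euclideanreal (\<lambda>x. g x i)"
    and eta: "\<eta> > 0" and r: "r > 0"
  shows "\<exists>\<V>. finite \<V> \<and> (\<forall>V\<in>\<V>. openin mtopology V) \<and> \<Union>\<V> = M \<and>
     (\<forall>V\<in>\<V>. \<forall>y\<in>V. \<forall>z\<in>V. d y z < r \<and> (\<forall>i<N. \<bar>g y i - g z i\<bar> < \<eta>)) \<and>
     (\<forall>x\<in>M. card {V\<in>\<V>. x \<in> V} \<le> n + 1)"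
proof -
  define G where "G = (\<lambda>x y. \<Sum>i<N. \<bar>g y i - g x i\<bar>)"
  define B where "B = (\<lambda>x. mball x (r/2) \<inter> {y \<in> topspace mtopology. G x y \<in> {..<\<eta>/2}})"
  have Gc: "continuous_map mtopology euclideanreal (G x)" for x
    unfolding G_def using g by (intro continuous_map_sum continuous_map_real_abs continuous_map_diff) auto
  have Bo: "openin mtopology (B x)" for x
    unfolding B_def by (intro openin_Int openin_mball openin_continuous_map_preimage[OF Gc]) auto
  have Bsmall: "d y z < r \<and> (\<forall>i<N. \<bar>g y i - g z i\<bar> < \<eta>)" if "y \<in> B x" "z \<in> B x" for x y z
  proof -
    have y: "y \<in> M" "x \<in> M" "d x y < r/2" "G x y < \<eta>/2" using that by (auto simp: B_def)
    have z: "z \<in> M" "d x z < r/2" "G x z < \<eta>/2" using that by (auto simp: B_def)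
    have "d y z \<le> d y x + d x z" using triangle y z by blast
    then have "d y z < r" using y z commute[of x y] by linarith
    moreover have "\<bar>g y i - g z i\<bar> < \<eta>" if "i < N" for i
    proof -
      have "\<bar>g y i - g x i\<bar> \<le> G x y" unfolding G_def
        by (rule member_le_sum[of i "{..<N}" "\<lambda>i. \<bar>g y i - g x i\<bar>"]) (use that in auto)
      moreover have "\<bar>g z i - g x i\<bar> \<le> G x z" unfolding G_def
        by (rule member_le_sum[of i "{..<N}" "\<lambda>i. \<bar>g z i - g x i\<bar>"]) (use that in auto)
      ultimately show ?thesis using y z by linarith
    qed
    ultimately show ?thesis by blast
  qed
  have cov: "M \<subseteq> \<Union>(B ` M)"
  proof
    fix x assume "x \<in> M"
    then have "x \<in> B x" using r eta by (simp add: B_def G_def)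
    then show "x \<in> \<Union>(B ` M)" using \<open>x \<in> M\<close> by blast
  qed
  have "\<forall>U\<in>B ` M. openin mtopology U" using Bo by blast
  moreover have "topspace mtopology \<subseteq> \<Union>(B ` M)" using cov by simp
  ultimately have "\<exists>F. finite F \<and> F \<subseteq> B ` M \<and> topspace mtopology \<subseteq> \<Union>F"
    using cpt[unfolded compact_space_alt, rule_format, of "B ` M"] by blast
  then obtain F where F: "finite F" "F \<subseteq> B ` M" "M \<subseteq> \<Union>F" by auto
  have BM: "B x \<subseteq> M" for x by (auto simp: B_def)
  have "\<Union>F = M" using F BM by blast
  moreover have "\<forall>U\<in>F. openin mtopology U" using F Bo by blast
  ultimately have D: "finite F \<and> (\<forall>U\<in>F. openin mtopology U) \<and> \<Union>F = M" using F(1) by blast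
  obtain \<V> where V: "finite \<V>" "\<forall>V\<in>\<V>. openin mtopology V" "\<Union>\<V> = M"
    "\<forall>V\<in>\<V>. \<exists>U\<in>F. V \<subseteq> U" "\<forall>x\<in>M. card {V\<in>\<V>. x \<in> V} \<le> n + 1"
    using dim[unfolded covering_dim_le_def topspace_mtopology, rule_format, OF D] by blast
  have "\<forall>V\<in>\<V>. \<forall>y\<in>V. \<forall>z\<in>V. d y z < r \<and> (\<forall>i<N. \<bar>g y i - g z i\<bar> < \<eta>)"
  proof (intro ballI)
    fix V y z assume "V \<in> \<V>" "y \<in> V" "z \<in> V"
    then obtain U where "U \<in> F" "V \<subseteq> U" using V by blast
    then obtain x where "U = B x" using F by blast
    then show "d y z < r \<and> (\<forall>i<N. \<bar>g y i - g z i\<bar> < \<eta>)"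
      using Bsmall \<open>V \<subseteq> U\<close> \<open>y \<in> V\<close> \<open>z \<in> V\<close> by blast
  qed
  then show ?thesis using V by blast
qed


lemma build_map:
  fixes g :: "'a \<Rightarrow> nat \<Rightarrow> real" and n N :: nat and \<V> :: "'a set set"
  assumes fV: "finite \<V>" and oV: "\<forall>V\<in>\<V>. openin mtopology V" and cV: "\<Union>\<V> = M"
    and small: "\<forall>V\<in>\<V>. \<forall>y\<in>V. \<forall>z\<in>V. d y z < r \<and> (\<forall>i<N. \<bar>g y i - g z i\<bar> < \<eta>/2)"
    and order: "\<forall>x\<in>M. card {V\<in>\<V>. x \<in> V} \<le> n + 1"
    and N: "N = 2*n+1" and eta: "\<eta> > 0"
  shows "\<exists>h. (\<forall>i<N. continuous_map mtopology euclideanreal (\<lambda>x. h x i)) \<and>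
     (\<forall>x\<in>M. \<forall>i<N. \<bar>h x i - g x i\<bar> \<le> \<eta>) \<and>
     (\<forall>x\<in>M. \<forall>y\<in>M. (\<forall>i<N. h x i = h y i) \<longrightarrow> d x y < r)"
proof -
  define p where "p = (\<lambda>V::'a set. SOME q. q \<in> V)"
  define a where "a = (\<lambda>V. g (p V))"
  have "\<eta>/2 > 0" "N \<ge> 1" using eta N by auto
  then obtain v where v: "\<forall>V\<in>\<V>. \<forall>i<N. \<bar>v V i - a V i\<bar> < \<eta>/2" "GP N \<V> v"
    using general_position[OF fV, of "\<eta>/2" N a] by blast
  define S where "S = (\<lambda>x. \<Sum>V\<in>\<V>. psi V x)"
  have Spos: "S x > 0" if xM: "x \<in> M" for x
  proof -
    obtain V0 where "V0 \<in> \<V>" "x \<in> V0" using cV xM by blast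
    then have "psi V0 x > 0" using psi_pos oV by blast
    then show ?thesis unfolding S_def
      using sum_pos2[OF fV \<open>V0 \<in> \<V>\<close>, of "\<lambda>V. psi V x"] psi_nonneg by blast
  qed
  define phi where "phi = (\<lambda>V x. psi V x / S x)"
  define h where "h = (\<lambda>x i. \<Sum>V\<in>\<V>. phi V x * v V i)"
  have phi_nonneg: "phi V x \<ge> 0" if "x \<in> M" for V x
    using psi_nonneg[of V x] Spos[OF that] by (simp add: phi_def)
  have phi_zero: "phi V x = 0" if "x \<in> M" "x \<notin> V" for V x
    using psi_zero[of x V] that by (simp add: phi_def)
  have phi_pos: "phi V x > 0" if "x \<in> V" "V \<in> \<V>" for V x
  proof -
    have "x \<in> M" using that cV by blast
    then show ?thesis using psi_pos[of V x] oV that Spos by (simp add: phi_def)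
  qed
  have phi_sum: "(\<Sum>V\<in>\<V>. phi V x) = 1" if "x \<in> M" for x
    using Spos[OF that] by (simp add: phi_def S_def sum_divide_distrib[symmetric])
  have hc: "\<forall>i<N. continuous_map mtopology euclideanreal (\<lambda>x. h x i)"
  proof (intro allI impI)
    fix i assume "i < N"
    have Sc: "continuous_map mtopology euclideanreal S"
      unfolding S_def using fV by (intro continuous_map_sum psi_cont)
    show "continuous_map mtopology euclideanreal (\<lambda>x. h x i)"
      unfolding h_def phi_def using fV
      by (intro continuous_map_sum continuous_map_real_mult continuous_map_real_divide psi_cont Sc)
        (auto dest: Spos)
  qed
  have close: "\<forall>x\<in>M. \<forall>i<N. \<bar>h x i - g x i\<bar> \<le> \<eta>"
  proof (intro ballI allI impI)
    fix x i assume x: "x \<in> M" and i: "i < N"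
    have "h x i - g x i = (\<Sum>V\<in>\<V>. phi V x * v V i) - (\<Sum>V\<in>\<V>. phi V x) * g x i"
      using phi_sum[OF x] by (simp add: h_def)
    also have "\<dots> = (\<Sum>V\<in>\<V>. phi V x * (v V i - g x i))"
      by (simp add: sum_distrib_right sum_subtractf right_diff_distrib)
    finally have "\<bar>h x i - g x i\<bar> \<le> (\<Sum>V\<in>\<V>. \<bar>phi V x * (v V i - g x i)\<bar>)"
      using sum_abs by (metis)
    also have "\<dots> \<le> (\<Sum>V\<in>\<V>. phi V x * \<eta>)"
    proof (rule sum_mono)
      fix V assume V: "V \<in> \<V>"
      show "\<bar>phi V x * (v V i - g x i)\<bar> \<le> phi V x * \<eta>"
      proof (cases "x \<in> V")
        case True
        then have pV: "p V \<in> V" unfolding p_def by (rule someI)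
        have "\<bar>v V i - g (p V) i\<bar> < \<eta>/2" using v(1) V i by (simp add: a_def)
        moreover have "\<bar>g (p V) i - g x i\<bar> < \<eta>/2" using small V pV True i by blast
        ultimately have "\<bar>v V i - g x i\<bar> \<le> \<eta>" by linarith
        then show ?thesis using phi_nonneg[OF x, of V]
          by (simp add: abs_mult mult_left_mono)
      next
        case False
        then show ?thesis using phi_zero[OF x False] by simp
      qed
    qed
    also have "\<dots> = \<eta>" using phi_sum[OF x] by (simp add: sum_distrib_right[symmetric])
    finally show "\<bar>h x i - g x i\<bar> \<le> \<eta>" .
  qed
  have sep: "\<forall>x\<in>M. \<forall>y\<in>M. (\<forall>i<N. h x i = h y i) \<longrightarrow> d x y < r"
  proof (intro ballI impI)
    fix x y assume x: "x \<in> M" and y: "y \<in> M" and eq: "\<forall>i<N. h x i = h y i"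
    define J where "J = {V\<in>\<V>. x \<in> V} \<union> {V\<in>\<V>. y \<in> V}"
    define l where "l = (\<lambda>V. phi V x - phi V y)"
    have JV: "J \<subseteq> \<V>" by (auto simp: J_def)
    have cJ: "card J \<le> N + 1"
    proof -
      have "card J \<le> card {V\<in>\<V>. x \<in> V} + card {V\<in>\<V>. y \<in> V}"
        unfolding J_def by (rule card_Un_le)
      moreover have "card {V\<in>\<V>. x \<in> V} \<le> n + 1" using order x by blast
      moreover have "card {V\<in>\<V>. y \<in> V} \<le> n + 1" using order y by blast
      ultimately show ?thesis using N by linarith
    qed
    have out: "l V = 0" if "V \<in> \<V> - J" for V
      using that phi_zero[OF x, of V] phi_zero[OF y, of V] by (auto simp: J_def l_def)
    have s1: "(\<Sum>V\<in>J. l V) = 0"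
    proof -
      have "(\<Sum>V\<in>J. l V) = (\<Sum>V\<in>\<V>. l V)"
        by (rule sum.mono_neutral_left[OF fV JV]) (use out in blast)
      also have "\<dots> = 0" using phi_sum[OF x] phi_sum[OF y] by (simp add: l_def sum_subtractf)
      finally show ?thesis .
    qed
    have s2: "\<forall>i<N. (\<Sum>V\<in>J. l V * v V i) = 0"
    proof (intro allI impI)
      fix i assume i: "i < N"
      have "(\<Sum>V\<in>J. l V * v V i) = (\<Sum>V\<in>\<V>. l V * v V i)"
        by (rule sum.mono_neutral_left[OF fV JV]) (use out in simp)
      also have "\<dots> = h x i - h y i"
        by (simp add: l_def h_def sum_subtractf left_diff_distrib)
      also have "\<dots> = 0" using eq i by simp
      finally show "(\<Sum>V\<in>J. l V * v V i) = 0" .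
    qed
    obtain V0 where V0: "V0 \<in> \<V>" "x \<in> V0" using cV x by blast
    then have "V0 \<in> J" by (simp add: J_def)
    then have "l V0 = 0" using GPD[OF v(2) JV cJ s1 s2] by blast
    then have "phi V0 y > 0" using phi_pos[OF V0(2) V0(1)] by (simp add: l_def)
    then have "y \<in> V0" using phi_zero[OF y, of V0] by force
    then show "d x y < r" using small V0 by blast
  qed
  show ?thesis using hc close sep by blast
qed


lemma density:
  fixes g :: "'a \<Rightarrow> nat \<Rightarrow> real" and n N :: nat
  assumes cpt: "compact_space mtopology" and dim: "covering_dim_le mtopology n"
    and N: "N = 2*n+1"
    and g: "\<forall>i<N. continuous_map mtopology euclideanreal (\<lambda>x. g x i)"
    and eta: "\<eta> > 0" and r: "r > 0"
  shows "\<exists>h. (\<forall>i<N. continuous_map mtopology euclideanreal (\<lambda>x. h x i)) \<and>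
     (\<forall>x\<in>M. \<forall>i<N. \<bar>h x i - g x i\<bar> \<le> \<eta>) \<and> (\<exists>\<delta>>0. sepN N h r \<delta>)"
proof -
  have eta2: "\<eta>/2 > 0" using eta by simp
  obtain \<V> where V: "finite \<V>" "\<forall>V\<in>\<V>. openin mtopology V" "\<Union>\<V> = M"
     "\<forall>V\<in>\<V>. \<forall>y\<in>V. \<forall>z\<in>V. d y z < r \<and> (\<forall>i<N. \<bar>g y i - g z i\<bar> < \<eta>/2)"
     "\<forall>x\<in>M. card {V\<in>\<V>. x \<in> V} \<le> n + 1"
    using small_cover[OF cpt dim g eta2 r] apply (elim exE conjE) apply (rule that) apply assumption+ done
  obtain h where h: "\<forall>i<N. continuous_map mtopology euclideanreal (\<lambda>x. h x i)"
     "\<forall>x\<in>M. \<forall>i<N. \<bar>h x i - g x i\<bar> \<le> \<eta>"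
     "\<forall>x\<in>M. \<forall>y\<in>M. (\<forall>i<N. h x i = h y i) \<longrightarrow> d x y < r"
    using build_map[OF V N eta] by blast
  obtain \<delta> where "\<delta> > 0" "sepN N h r \<delta>" using robust_sep[OF cpt h(1) h(3)] by blast
  then show ?thesis using h by blast
qed

lemma unif_limit_cont:
  assumes "\<forall>e>0. \<exists>f. continuous_map mtopology euclideanreal f \<and> (\<forall>x\<in>M. \<bar>F x - f x\<bar> \<le> e)"
  shows "continuous_map mtopology euclideanreal F"
proof -
  have "continuous_map mtopology Met_TC.mtopology F"
    unfolding metric_continuous_map[OF Met_TC.Metric_space_axioms]
  proof (intro conjI ballI allI impI)
    fix a and e :: real assume a: "a \<in> M" and e: "e > 0"
    have e4: "e/4 > 0" using e by simp
    obtain f where f: "continuous_map mtopology euclideanreal f" "\<forall>x\<in>M. \<bar>F x - f x\<bar> \<le> e/4"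
      using assms e4 by blast
    have "continuous_map mtopology Met_TC.mtopology f" using f(1) by simp
    then have "\<forall>a\<in>M. \<forall>\<epsilon>>0. \<exists>\<delta>>0. \<forall>x. x \<in> M \<and> d a x < \<delta> \<longrightarrow> dist (f a) (f x) < \<epsilon>"
      unfolding metric_continuous_map[OF Met_TC.Metric_space_axioms] by blast
    then have "\<exists>\<delta>>0. \<forall>x. x \<in> M \<and> d a x < \<delta> \<longrightarrow> dist (f a) (f x) < e/4"
      using a e4 by blast
    then obtain \<delta> where \<delta>: "\<delta> > 0" "\<forall>x. x \<in> M \<and> d a x < \<delta> \<longrightarrow> dist (f a) (f x) < e/4"
      by blast
    show "\<exists>\<delta>>0. \<forall>x. x \<in> M \<and> d a x < \<delta> \<longrightarrow> dist (F a) (F x) < e"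
    proof (intro exI[of _ \<delta>] conjI allI impI)
      fix x assume x: "x \<in> M \<and> d a x < \<delta>"
      have "\<bar>f a - f x\<bar> < e/4" using \<delta>(2) x by (simp add: dist_real_def)
      moreover have "\<bar>F a - f a\<bar> \<le> e/4" "\<bar>F x - f x\<bar> \<le> e/4" using f(2) a x by auto
      ultimately show "dist (F a) (F x) < e" unfolding dist_real_def using e by linarith
    qed (use \<delta> in simp)
  qed auto
  then show ?thesis by simp
qed


lemma sepN_mono: "sepN N h r \<delta> \<Longrightarrow> \<delta>' \<le> \<delta> \<Longrightarrow> sepN N h r \<delta>'"
  unfolding sepN_def by force

lemma embedding:
  assumes cpt: "compact_space mtopology" and dim: "covering_dim_le mtopology n"
  shows "\<exists>N\<ge>1. \<exists>g::'a\<Rightarrow>nat\<Rightarrow>real. (\<forall>i<N. continuous_map mtopology euclideanreal (\<lambda>x. g x i)) \<and>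
           (\<forall>x\<in>M. \<forall>y\<in>M. (\<forall>i<N. g x i = g y i) \<longrightarrow> x = y)"
proof -
  define N where "N = 2*n+1"
  have N1: "N \<ge> 1" by (simp add: N_def)
  define C where "C = (\<lambda>g::'a\<Rightarrow>nat\<Rightarrow>real. \<forall>i<N. continuous_map mtopology euclideanreal (\<lambda>x. g x i))"
  define P where "P = (\<lambda>k (g::'a\<Rightarrow>nat\<Rightarrow>real) (\<rho>::real) (g'::'a\<Rightarrow>nat\<Rightarrow>real) (\<rho>'::real).
     C g' \<and> (\<forall>x\<in>M. \<forall>i<N. \<bar>g' x i - g x i\<bar> \<le> \<rho>) \<and> 0 < \<rho>' \<and> \<rho>' \<le> \<rho>/2 \<and>
     sepN N g' (1 / real (Suc k)) (8 * real N * \<rho>'))"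
  have step: "\<exists>q. P k g \<rho> (fst q) (snd q)" if g: "C g" and \<rho>: "\<rho> > 0" for k g \<rho>
  proof -
    have r: "1 / real (Suc k) > 0" by simp
    obtain h where h: "C h" "\<forall>x\<in>M. \<forall>i<N. \<bar>h x i - g x i\<bar> \<le> \<rho>"
      "\<exists>\<delta>>0. sepN N h (1 / real (Suc k)) \<delta>"
      using density[OF cpt dim N_def g[unfolded C_def] \<rho> r] unfolding C_def by blast
    obtain \<delta> where \<delta>: "\<delta> > 0" "sepN N h (1 / real (Suc k)) \<delta>" using h(3) by blast
    define \<rho>' where "\<rho>' = min (\<rho>/2) (\<delta> / (8 * real N))"
    have "8 * real N * \<rho>' \<le> 8 * real N * (\<delta> / (8 * real N))"
      unfolding \<rho>'_def by (intro mult_left_mono) auto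
    also have "\<dots> = \<delta>" using N1 by simp
    finally have "sepN N h (1 / real (Suc k)) (8 * real N * \<rho>')" by (rule sepN_mono[OF \<delta>(2)])
    moreover have "0 < \<rho>'" "\<rho>' \<le> \<rho>/2" using \<rho> \<delta> N1 by (auto simp: \<rho>'_def)
    ultimately have "P k g \<rho> h \<rho>'" using h by (simp add: P_def)
    then show ?thesis by (intro exI[of _ "(h, \<rho>')"]) simp
  qed
  define G where "G = rec_nat ((\<lambda>x i. 0::real), (1::real))
     (\<lambda>k q. SOME q'. P k (fst q) (snd q) (fst q') (snd q'))"
  have G0: "G 0 = ((\<lambda>x i. 0), 1)" by (simp add: G_def)
  have GS: "G (Suc k) = (SOME q'. P k (fst (G k)) (snd (G k)) (fst q') (snd q'))" for k
    by (simp add: G_def)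
  have inv: "C (fst (G k)) \<and> snd (G k) > 0" for k
  proof (induction k)
    case 0 then show ?case by (simp add: G0 C_def)
  next
    case (Suc k)
    have "P k (fst (G k)) (snd (G k)) (fst (G (Suc k))) (snd (G (Suc k)))"
      unfolding GS by (rule someI_ex[OF step]) (use Suc in auto)
    then show ?case by (simp add: P_def)
  qed
  have PG: "P k (fst (G k)) (snd (G k)) (fst (G (Suc k))) (snd (G (Suc k)))" for k
    unfolding GS by (rule someI_ex[OF step]) (use inv in auto)
  define gs where "gs = (\<lambda>k. fst (G k))"
  define rho where "rho = (\<lambda>k. snd (G k))"
  have F1: "C (gs k)" for k using inv by (simp add: gs_def)
  have F2: "\<forall>x\<in>M. \<forall>i<N. \<bar>gs (Suc k) x i - gs k x i\<bar> \<le> rho k" for k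
    using PG[of k] by (simp add: P_def gs_def rho_def)
  have F3: "0 < rho k" for k using inv by (simp add: rho_def)
  have F4: "rho (Suc k) \<le> rho k / 2" for k
    using PG[of k] by (simp add: P_def gs_def rho_def)
  have F5: "sepN N (gs (Suc k)) (1 / real (Suc k)) (8 * real N * rho (Suc k))" for k
    using PG[of k] by (simp add: P_def gs_def rho_def)
  have tele: "\<bar>gs m x i - gs k x i\<bar> \<le> 2 * rho k - 2 * rho m"
    if "k \<le> m" "x \<in> M" "i < N" for k m x i
    using that(1)
  proof (induction m rule: dec_induct)
    case base then show ?case by simp
  next
    case (step m)
    have "\<bar>gs (Suc m) x i - gs m x i\<bar> \<le> rho m" using F2 that by blast
    then show ?case using step.IH F4[of m] by linarith
  qed
  have rho_pow: "rho k \<le> (1/2)^k" for k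
  proof (induction k)
    case 0 then show ?case by (simp add: rho_def G0)
  next
    case (Suc k) then show ?case using F4[of k] by simp
  qed
  have rho_small: "\<exists>k. rho k < e" if e: "e > 0" for e
  proof -
    obtain k where "(1/2::real)^k < e" using real_arch_pow_inv[OF e, of "1/2"] by auto
    then show ?thesis using rho_pow[of k] by (intro exI[of _ k]) linarith
  qed
  have rho_mono: "rho m \<le> rho k" if "k \<le> m" for k m
    using that
  proof (induction m rule: dec_induct)
    case (step m) then show ?case using F4[of m] F3[of m] by linarith
  qed simp
  have conv: "convergent (\<lambda>m. gs m x i)" if x: "x \<in> M" and i: "i < N" for x i
  proof (rule real_Cauchy_convergent, rule CauchyI)
    fix e :: real assume e: "e > 0"
    then obtain k where k: "rho k < e/4" using rho_small[of "e/4"] by auto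
    show "\<exists>K. \<forall>m\<ge>K. \<forall>n\<ge>K. norm (gs m x i - gs n x i) < e"
    proof (intro exI[of _ k] allI impI)
      fix m n assume "k \<le> m" "k \<le> n"
      then have "\<bar>gs m x i - gs k x i\<bar> \<le> 2 * rho k - 2 * rho m"
                "\<bar>gs n x i - gs k x i\<bar> \<le> 2 * rho k - 2 * rho n"
        using tele x i by auto
      then show "norm (gs m x i - gs n x i) < e" using F3[of m] F3[of n] k by simp
    qed
  qed
  define gl where "gl = (\<lambda>x i. lim (\<lambda>m. gs m x i))"
  have lim: "(\<lambda>m. gs m x i) \<longlonglongrightarrow> gl x i" if "x \<in> M" "i < N" for x i
    using conv[OF that] by (simp add: gl_def convergent_LIMSEQ_iff)
  have bound: "\<bar>gl x i - gs k x i\<bar> \<le> 2 * rho k" if x: "x \<in> M" and i: "i < N" for x i k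
  proof (rule LIMSEQ_le_const2)
    show "(\<lambda>m. \<bar>gs m x i - gs k x i\<bar>) \<longlonglongrightarrow> \<bar>gl x i - gs k x i\<bar>"
      by (intro tendsto_rabs tendsto_diff lim[OF x i] tendsto_const)
    show "\<exists>K. \<forall>m\<ge>K. \<bar>gs m x i - gs k x i\<bar> \<le> 2 * rho k"
      using tele[OF _ x i] F3 by (intro exI[of _ k]) (smt (verit))
  qed
  have glc: "\<forall>i<N. continuous_map mtopology euclideanreal (\<lambda>x. gl x i)"
  proof (intro allI impI unif_limit_cont allI impI)
    show "\<exists>f. continuous_map mtopology euclideanreal f \<and> (\<forall>x\<in>M. \<bar>gl x i - f x\<bar> \<le> e)"
      if i: "i < N" and e: "0 < e" for i :: nat and e :: real
    proof -
      obtain k where k: "rho k < e/2" using rho_small[of "e/2"] e by auto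
      have "\<forall>x\<in>M. \<bar>gl x i - gs k x i\<bar> \<le> e"
      proof
        fix x assume "x \<in> M"
        then have "\<bar>gl x i - gs k x i\<bar> \<le> 2 * rho k" by (rule bound[OF _ i])
        then show "\<bar>gl x i - gs k x i\<bar> \<le> e" using k by linarith
      qed
      moreover have "continuous_map mtopology euclideanreal (\<lambda>x. gs k x i)"
        using F1[of k] i by (simp add: C_def)
      ultimately show ?thesis by blast
    qed
  qed
  have ginj: "\<forall>x\<in>M. \<forall>y\<in>M. (\<forall>i<N. gl x i = gl y i) \<longrightarrow> x = y"
  proof (intro ballI impI)
    fix x y assume x: "x \<in> M" and y: "y \<in> M" and eq: "\<forall>i<N. gl x i = gl y i"
    have small: "d x y < 1 / real (Suc k)" for k
    proof -
      have "(\<Sum>i<N. \<bar>gs (Suc k) x i - gs (Suc k) y i\<bar>) \<le> (\<Sum>i<N. 4 * rho (Suc k))"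
      proof (rule sum_mono)
        fix i assume "i \<in> {..<N}"
        then have i: "i < N" by simp
        have "\<bar>gl x i - gs (Suc k) x i\<bar> \<le> 2 * rho (Suc k)" by (rule bound[OF x i])
        moreover have "\<bar>gl y i - gs (Suc k) y i\<bar> \<le> 2 * rho (Suc k)" by (rule bound[OF y i])
        ultimately show "\<bar>gs (Suc k) x i - gs (Suc k) y i\<bar> \<le> 4 * rho (Suc k)"
          using eq i by auto
      qed
      also have "\<dots> = 4 * real N * rho (Suc k)" by simp
      also have "\<dots> < 8 * real N * rho (Suc k)" using N1 F3[of "Suc k"] by simp
      finally show ?thesis using F5[of k] x y unfolding sepN_def by blast
    qed
    have "d x y \<le> 0"
    proof (rule ccontr)
      assume "\<not> d x y \<le> 0"
      then obtain k where "inverse (real (Suc k)) < d x y" using reals_Archimedean[of "d x y"] by auto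
      then show False using small[of k] by (simp add: inverse_eq_divide)
    qed
    then show "x = y" using x y nonneg[of x y] by simp
  qed
  show ?thesis using N1 glc ginj by blast
qed

end


lemma max_metric:
  fixes f :: "'a \<Rightarrow> nat \<Rightarrow> real" and N :: nat
  assumes N: "N \<ge> 1" and inj: "\<forall>x\<in>X. \<forall>y\<in>X. (\<forall>j<N. f x j = f y j) \<longrightarrow> x = y"
  shows "Metric_space X (\<lambda>x y. MAX j\<in>{..<N}. \<bar>f x j - f y j\<bar>)"
proof -
  define e where "e = (\<lambda>x y. MAX j\<in>{..<N}. \<bar>f x j - f y j\<bar>)"
  have ne: "{..<N} \<noteq> {}" using N by (simp add: lessThan_empty_iff)
  have ge: "\<bar>f x j - f y j\<bar> \<le> e x y" if "j < N" for x y j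
    unfolding e_def by (rule Max_ge) (use that in auto)
  have le: "e x y \<le> c" if "\<forall>j<N. \<bar>f x j - f y j\<bar> \<le> c" for x y c
    unfolding e_def using that ne by (subst Max_le_iff) auto
  show ?thesis
    unfolding e_def[symmetric]
  proof
    fix x y
    show "0 \<le> e x y" using ge[of 0 x y] N by linarith
    show "e x y = e y x" unfolding e_def by (simp add: abs_minus_commute)
  next
    fix x y assume x: "x \<in> X" and y: "y \<in> X"
    show "(e x y = 0) = (x = y)"
    proof
      assume "e x y = 0"
      then have "\<forall>j<N. f x j = f y j" using ge[of _ x y] by fastforce
      then show "x = y" using inj x y by blast
    next
      assume "x = y"
      then have "e x y \<le> 0" using le[of x y 0] by simp
      then show "e x y = 0" using ge[of 0 x y] N by linarith
    qed
  next
    fix x y z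
    show "e x z \<le> e x y + e y z"
    proof (rule le, intro allI impI)
      fix j assume "j < N"
      then have "\<bar>f x j - f y j\<bar> \<le> e x y" "\<bar>f y j - f z j\<bar> \<le> e y z" using ge by auto
      then show "\<bar>f x j - f z j\<bar> \<le> e x y + e y z" by linarith
    qed
  qed
qed

lemma final_metric:
  fixes T :: "'a topology" and f :: "'a \<Rightarrow> nat \<Rightarrow> real" and N :: nat
  assumes cpt: "compact_space T" and N: "N \<ge> 1"
    and cont: "\<forall>j<N. continuous_map T euclideanreal (\<lambda>x. f x j)"
    and inj: "\<forall>x\<in>topspace T. \<forall>y\<in>topspace T. (\<forall>j<N. f x j = f y j) \<longrightarrow> x = y"
  shows "(\<lambda>x y. MAX j\<in>{..<N}. \<bar>f x j - f y j\<bar>) \<in> Met T"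
    and "linf_embeddable T (\<lambda>x y. MAX j\<in>{..<N}. \<bar>f x j - f y j\<bar>)"
proof -
  define e where "e = (\<lambda>x y. MAX j\<in>{..<N}. \<bar>f x j - f y j\<bar>)"
  interpret E: Metric_space "topspace T" e unfolding e_def by (rule max_metric[OF N inj])
  have ne: "{..<N} \<noteq> {}" using N by (simp add: lessThan_empty_iff)
  have le: "e x y \<le> c" if "\<forall>j<N. \<bar>f x j - f y j\<bar> \<le> c" for x y c
    unfolding e_def using that ne by (subst Max_le_iff) auto
  have "T = E.mtopology"
  proof (rule compact_Hausdorff_space_optimal)
    show "topspace T = topspace E.mtopology" by simp
    show "Hausdorff_space E.mtopology" by (rule E.Hausdorff_space_mtopology)
    show "compact_space T" by (rule cpt)
    fix U assume U: "openin E.mtopology U"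
    show "openin T U"
      unfolding openin_subopen[of T U]
    proof
      fix x assume xU: "x \<in> U"
      have UX: "U \<subseteq> topspace T" using U E.openin_mtopology by blast
      obtain r where r: "r > 0" "E.mball x r \<subseteq> U" using U xU E.openin_mtopology by blast
      define S where "S = (\<lambda>y. \<Sum>j<N. \<bar>f y j - f x j\<bar>)"
      have Sc: "continuous_map T euclideanreal S"
        unfolding S_def using cont by (intro continuous_map_sum continuous_map_real_abs continuous_map_diff) auto
      define W where "W = {y \<in> topspace T. S y \<in> {..<r}}"
      have "openin T W" unfolding W_def by (rule openin_continuous_map_preimage[OF Sc]) simp
      moreover have "x \<in> W" using xU UX r by (auto simp: W_def S_def)
      moreover have "W \<subseteq> U"
      proof
        fix y assume y: "y \<in> W"
        have "e x y \<le> S y"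
        proof (rule le, intro allI impI)
          fix j assume "j < N"
          then have "\<bar>f y j - f x j\<bar> \<le> S y" unfolding S_def
            by (intro member_le_sum) auto
          then show "\<bar>f x j - f y j\<bar> \<le> S y" by (simp add: abs_minus_commute)
        qed
        then have "y \<in> E.mball x r" using y xU UX by (auto simp: W_def E.in_mball)
        then show "y \<in> U" using r by blast
      qed
      ultimately show "\<exists>W. openin T W \<and> x \<in> W \<and> W \<subseteq> U" by blast
    qed
  qed
  then show "(\<lambda>x y. MAX j\<in>{..<N}. \<bar>f x j - f y j\<bar>) \<in> Met T"
    unfolding Met_def e_def[symmetric] using E.Metric_space_axioms by simp
  show "linf_embeddable T (\<lambda>x y. MAX j\<in>{..<N}. \<bar>f x j - f y j\<bar>)"
    unfolding linf_embeddable_def using N by blast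
qed


theorem theorem2p2:
  fixes T :: "'a topology"
  assumes "compact_space T" and "metrizable_space T" and "finite_dimensional T"
  shows "\<forall>d\<in>Met T. \<forall>\<epsilon>>0. \<exists>e\<in>{e\<in>Met T. linf_embeddable T e}. DX T d e < ereal \<epsilon>"
proof (intro ballI allI impI)
  fix d and \<epsilon> :: real assume dM: "d \<in> Met T" and \<epsilon>: "\<epsilon> > 0"
  define X where "X = topspace T"
  have Md: "Metric_space X d" and Td: "Metric_space.mtopology X d = T"
    using dM by (auto simp: Met_def X_def)
  interpret D: Metric_space X d by (rule Md)
  obtain n where dim: "covering_dim_le T n" using assms(3) finite_dimensional_def by blast
  have cpt': "compact_space D.mtopology" using assms(1) Td by simp
  have dim': "covering_dim_le D.mtopology n" using dim Td by simp
  have "\<exists>N\<ge>1. \<exists>g::'a\<Rightarrow>nat\<Rightarrow>real. (\<forall>i<N. continuous_map D.mtopology euclideanreal (\<lambda>x. g x i)) \<and>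
           (\<forall>x\<in>X. \<forall>y\<in>X. (\<forall>i<N. g x i = g y i) \<longrightarrow> x = y)"
    by (rule D.embedding[OF cpt' dim'])
  then obtain N and g :: "'a\<Rightarrow>nat\<Rightarrow>real" where N1: "N \<ge> 1"
    and gc: "\<forall>i<N. continuous_map T euclideanreal (\<lambda>x. g x i)"
    and ginj: "\<forall>x\<in>X. \<forall>y\<in>X. (\<forall>i<N. g x i = g y i) \<longrightarrow> x = y"
    unfolding Td by blast
  have "D.mtotally_bounded X" using cpt' D.compact_space_eq_mcomplete_mtotally_bounded by simp
  moreover have e4: "\<epsilon>/4 > 0" using \<epsilon> by simp
  ultimately have "\<exists>K. finite K \<and> K \<subseteq> X \<and> X \<subseteq> (\<Union>x\<in>K. D.mball x (\<epsilon>/4))"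
    unfolding D.mtotally_bounded_def by blast
  then obtain K where K: "finite K" "K \<subseteq> X" "X \<subseteq> (\<Union>x\<in>K. D.mball x (\<epsilon>/4))" by blast
  obtain ps where ps: "set ps = K" using finite_list[OF K(1)] by blast
  define m where "m = length ps"
  have "\<forall>i\<in>{..<N}. \<exists>b. \<forall>x\<in>X. \<bar>g x i\<bar> \<le> b"
  proof
    fix i assume "i \<in> {..<N}"
    then have c: "continuous_map T euclideanreal (\<lambda>x. g x i)" using gc by auto
    have "compactin T X" using assms(1) by (simp add: compact_space_def X_def)
    then have "compactin euclideanreal ((\<lambda>x. g x i) ` X)" by (rule image_compactin[OF _ c])
    then have "bounded ((\<lambda>x. g x i) ` X)" by (simp add: compact_imp_bounded)
    then show "\<exists>b. \<forall>x\<in>X. \<bar>g x i\<bar> \<le> b" unfolding bounded_real by blast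
  qed
  then obtain bf where bf: "\<forall>i\<in>{..<N}. \<forall>x\<in>X. \<bar>g x i\<bar> \<le> bf i" by metis
  define B where "B = (\<Sum>i<N. \<bar>bf i\<bar>)"
  have B0: "B \<ge> 0" by (simp add: B_def sum_nonneg)
  have gB: "\<bar>g x i\<bar> \<le> B" if "x \<in> X" "i < N" for x i
  proof -
    have "\<bar>bf i\<bar> \<le> B" unfolding B_def by (rule member_le_sum) (use that in auto)
    then show ?thesis using bf that by force
  qed
  define \<delta> where "\<delta> = \<epsilon> / (4 * (B + 1))"
  have \<delta>0: "\<delta> > 0" using \<epsilon> B0 by (simp add: \<delta>_def)
  have \<delta>B: "\<delta> * (2 * B) \<le> \<epsilon> / 2"
  proof -
    have "\<delta> * (2 * B) = \<epsilon> * (2 * B) / (4 * (B + 1))" by (simp add: \<delta>_def)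
    also have "\<dots> \<le> \<epsilon> * (2 * (B + 1)) / (4 * (B + 1))"
      using \<epsilon> B0 by (intro divide_right_mono mult_left_mono) auto
    also have "\<dots> = \<epsilon> / 2" using B0 by (simp add: field_simps)
    finally show ?thesis .
  qed
  define f where "f = (\<lambda>x j. if j < m then d x (ps ! j) else \<delta> * g x (j - m))"
  define N' where "N' = m + N"
  have N'1: "N' \<ge> 1" using N1 by (simp add: N'_def)
  have psX: "ps ! j \<in> X" if "j < m" for j using that ps K(2) m_def nth_mem by blast
  have fc: "\<forall>j<N'. continuous_map T euclideanreal (\<lambda>x. f x j)"
  proof (intro allI impI)
    fix j assume j: "j < N'"
    show "continuous_map T euclideanreal (\<lambda>x. f x j)"
    proof (cases "j < m")
      case True
      have "continuous_map D.mtopology euclideanreal (\<lambda>x. d x (ps ! j))"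
      proof (rule D.lip_cont[of _ 1], intro ballI)
        fix x y assume "x \<in> X" "y \<in> X"
        then have "\<bar>d x (ps ! j) - d (ps ! j) y\<bar> \<le> d x y"
          using D.mdist_reverse_triangle psX[OF True] by blast
        then show "\<bar>d x (ps ! j) - d y (ps ! j)\<bar> \<le> 1 * d x y" by (simp add: D.commute)
      qed
      then show ?thesis using True by (simp add: f_def Td)
    next
      case False
      then have "j - m < N" using j by (simp add: N'_def)
      then have "continuous_map T euclideanreal (\<lambda>x. \<delta> * g x (j - m))"
        using gc continuous_map_real_mult_left by blast
      then show ?thesis using False by (simp add: f_def)
    qed
  qed
  have finj: "\<forall>x\<in>topspace T. \<forall>y\<in>topspace T. (\<forall>j<N'. f x j = f y j) \<longrightarrow> x = y"
  proof (intro ballI impI)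
    fix x y assume x: "x \<in> topspace T" and y: "y \<in> topspace T" and eq: "\<forall>j<N'. f x j = f y j"
    have "\<forall>i<N. g x i = g y i"
    proof (intro allI impI)
      fix i assume "i < N"
      then have "f x (m + i) = f y (m + i)" using eq by (simp add: N'_def)
      then show "g x i = g y i" using \<delta>0 by (simp add: f_def)
    qed
    then show "x = y" using ginj x y by (simp add: X_def)
  qed
  define e where "e = (\<lambda>x y. MAX j\<in>{..<N'}. \<bar>f x j - f y j\<bar>)"
  have eM: "e \<in> Met T" and eL: "linf_embeddable T e"
    unfolding e_def using final_metric[OF assms(1) N'1 fc finj] by auto
  have ne: "{..<N'} \<noteq> {}" using N'1 by (simp add: lessThan_empty_iff)
  have close: "\<bar>d x y - e x y\<bar> \<le> \<epsilon>/2" if x: "x \<in> X" and y: "y \<in> X" for x y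
  proof -
    have bnd: "\<forall>j<N'. \<bar>f x j - f y j\<bar> \<le> d x y + \<epsilon>/2"
    proof (intro allI impI)
      fix j assume j: "j < N'"
      show "\<bar>f x j - f y j\<bar> \<le> d x y + \<epsilon>/2"
      proof (cases "j < m")
        case True
        have "\<bar>d x (ps ! j) - d (ps ! j) y\<bar> \<le> d x y"
          using D.mdist_reverse_triangle psX[OF True] x y by blast
        then show ?thesis using True j \<epsilon> by (simp add: f_def D.commute)
      next
        case False
        then have i: "j - m < N" using j by (simp add: N'_def)
        have "\<bar>g x (j - m) - g y (j - m)\<bar> \<le> 2 * B" using gB[OF x i] gB[OF y i] by linarith
        then have A: "\<delta> * \<bar>g x (j - m) - g y (j - m)\<bar> \<le> \<delta> * (2 * B)"
          using \<delta>0 by (intro mult_left_mono) auto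
        have C: "\<bar>\<delta> * g x (j - m) - \<delta> * g y (j - m)\<bar> = \<delta> * \<bar>g x (j - m) - g y (j - m)\<bar>"
          using \<delta>0 by (simp add: right_diff_distrib[symmetric] abs_mult)
        have "\<bar>\<delta> * g x (j - m) - \<delta> * g y (j - m)\<bar> \<le> \<epsilon>/2"
          using A C \<delta>B by linarith
        moreover have "f x j = \<delta> * g x (j - m)" "f y j = \<delta> * g y (j - m)" using False by (simp_all add: f_def)
        moreover have "0 \<le> d x y" by (rule D.nonneg)
        ultimately show ?thesis by linarith
      qed
    qed
    then have "e x y \<le> d x y + \<epsilon>/2"
      unfolding e_def using ne by (subst Max_le_iff) auto
    moreover have "d x y - \<epsilon>/2 \<le> e x y"
    proof -
      obtain p where p: "p \<in> K" "x \<in> D.mball p (\<epsilon>/4)" using K(3) x by blast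
      then obtain j where j: "j < m" "ps ! j = p" using ps by (auto simp: m_def in_set_conv_nth)
      have pX: "p \<in> X" using p K(2) by blast
      have dpx: "d p x < \<epsilon>/4" using p by (simp add: D.in_mball)
      have "d x y \<le> d x p + d p y" using D.triangle x y pX by blast
      then have "d x y - \<epsilon>/2 \<le> \<bar>f x j - f y j\<bar>"
        using dpx j D.commute[of x p] D.commute[of y p] by (simp add: f_def)
      also have "\<dots> \<le> e x y" unfolding e_def by (rule Max_ge) (use j in \<open>auto simp: N'_def\<close>)
      finally show ?thesis .
    qed
    ultimately show ?thesis by linarith
  qed
  have "DX T d e \<le> ereal (\<epsilon>/2)"
    unfolding DX_def
  proof (rule SUP_least)
    fix q assume "q \<in> topspace T \<times> topspace T"
    then show "ereal \<bar>d (fst q) (snd q) - e (fst q) (snd q)\<bar> \<le> ereal (\<epsilon>/2)"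
      using close by (auto simp: X_def)
  qed
  also have "\<dots> < ereal \<epsilon>" using \<epsilon> by simp
  finally have "DX T d e < ereal \<epsilon>" .
  then show "\<exists>e\<in>{e\<in>Met T. linf_embeddable T e}. DX T d e < ereal \<epsilon>" using eM eL by blast
qed


end
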